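(* A game $\mathcal{M}\subseteq\mathbb{N}_0$ (dimension $d=1$) is reflexive if and only if $\mathcal{M}=\mathcal{M}_k$ for some $k\in\mathbb{N}_0$, where $\mathcal{M}_0=\varnothing$ and, for $k\ge1$, with $p_k=3k-1$, $$\mathcal{M}_k=\{\,ip_k+j:\ i\in\mathbb{N}_0,\ k\le j\le 2k-1\,\}.$$
   Context: A one-heap game is a set $\mathcal{M}\subseteq\mathbb{N}_0$ of moves; from position $x\in\mathbb{N}_0$ one may move to $y\in\mathbb{N}_0$ iff $x-y\in\mathcal{M}$. Misère play: a player who cannot move wins. If $0\in\mathcal{M}$, $P(\mathcal{M})=\varnothing$. Otherwise: a position is an N-position if it has no option or some option is a P-position; otherwise it is a P-position; $P(\mathcal{M})$ denotes the set of P-positions. The game $\mathcal{M}$ is reflexive if $P(\mathcal{M})=\mathcal{M}$. *)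

theory Defs
  imports Main
begin

text \<open>One-heap misere game with move set M: from x one may move to x - m for m \<in> M, m \<le> x.
  is_P M x: x is a P-position.\<close>

function is_P :: "nat set \<Rightarrow> nat \<Rightarrow> bool" where
  "is_P M x = (if 0 \<in> M then False
               else (\<exists>m\<in>M. m \<le> x) \<and> (\<forall>m\<in>M. m \<le> x \<longrightarrow> \<not> is_P M (x - m)))"
  by auto
termination
  by (relation "measure snd") (auto, metis diff_less gr0I le0 not_le)

declare is_P.simps [simp del]

definition P_positions :: "nat set \<Rightarrow> nat set" where
  "P_positions M = {x. is_P M x}"

definition reflexive_game :: "nat set \<Rightarrow> bool" where
  "reflexive_game M \<longleftrightarrow> P_positions M = M"

definition M_k :: "nat \<Rightarrow> nat set" where
  "M_k k = (if k = 0 then {}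
            else {i * (3 * k - 1) + j | i j. k \<le> j \<and> j \<le> 2 * k - 1})"

end

theory Submission
  imports Defs
begin

lemma modlem: "(j::nat) < p \<Longrightarrow> (i*p+j) mod p = j"
  by simp

lemma Mk_mem: "k \<ge> 1 \<Longrightarrow> x \<in> M_k k \<longleftrightarrow> k \<le> x mod (3*k-1) \<and> x mod (3*k-1) \<le> 2*k-1"
proof
  assume k: "k \<ge> 1" and "x \<in> M_k k"
  then obtain i j where x: "x = i*(3*k-1)+j" and j: "k \<le> j" "j \<le> 2*k-1"
    by (auto simp: M_k_def)
  have "j < 3*k-1" using j k by linarith
  then have "x mod (3*k-1) = j" using x modlem by blast
  then show "k \<le> x mod (3*k-1) \<and> x mod (3*k-1) \<le> 2*k-1" using j by simp
next
  assume k: "k \<ge> 1" and h: "k \<le> x mod (3*k-1) \<and> x mod (3*k-1) \<le> 2*k-1"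
  have "x = (x div (3*k-1))*(3*k-1) + x mod (3*k-1)" by (metis div_mult_mod_eq)
  then show "x \<in> M_k k" using h k unfolding M_k_def by auto
qed

lemma Mk_ge: "k \<ge> 1 \<Longrightarrow> x \<in> M_k k \<Longrightarrow> k \<le> x"
  using Mk_mem by (metis le_trans mod_less_eq_dividend)

lemma key:
  assumes k: "k \<ge> 1"
  shows "x \<in> M_k k \<longleftrightarrow> k \<le> x \<and> \<not>(\<exists>a\<in>M_k k. \<exists>b\<in>M_k k. a+b=x)"
proof -
  define p where "p = 3*k-1"
  have p: "p = 3*k-1" "p > 0" using k p_def by auto
  have mem: "\<And>y. y \<in> M_k k \<longleftrightarrow> k \<le> y mod p \<and> y mod p \<le> 2*k-1"
    using Mk_mem[OF k] p_def by blast
  show ?thesis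
  proof
    assume x: "x \<in> M_k k"
    have "k \<le> x" using Mk_ge[OF k x] .
    moreover have "\<not>(\<exists>a\<in>M_k k. \<exists>b\<in>M_k k. a+b=x)"
    proof
      assume "\<exists>a\<in>M_k k. \<exists>b\<in>M_k k. a+b=x"
      then obtain a b where a: "a \<in> M_k k" and b: "b \<in> M_k k" and ab: "a+b=x" by blast
      have ra: "k \<le> a mod p" "a mod p \<le> 2*k-1" using a mem by auto
      have rb: "k \<le> b mod p" "b mod p \<le> 2*k-1" using b mem by auto
      have e: "x mod p = (a mod p + b mod p) mod p" using ab by (simp add: mod_add_eq)
      show False
      proof (cases "a mod p + b mod p < p")
        case True
        then have "x mod p = a mod p + b mod p" using e by simp
        moreover have "x mod p \<le> 2*k-1" using x mem by blast
        ultimately show False using ra rb k by linarith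
      next
        case False
        have "a mod p + b mod p < 2*p" using p(2) mod_less_divisor[OF p(2), of a] mod_less_divisor[OF p(2), of b] by linarith
        have s1: "(a mod p + b mod p) mod p = (a mod p + b mod p - p) mod p"
          by (rule le_mod_geq) (use False in simp)
        have s2: "(a mod p + b mod p - p) mod p = a mod p + b mod p - p"
          by (rule mod_less) (use \<open>a mod p + b mod p < 2*p\<close> in linarith)
        have "x mod p = a mod p + b mod p - p" using e s1 s2 by simp
        moreover have "k \<le> x mod p" using x mem by blast
        ultimately show False using ra rb k p(1) by linarith
      qed
    qed
    ultimately show "k \<le> x \<and> \<not>(\<exists>a\<in>M_k k. \<exists>b\<in>M_k k. a+b=x)" by blast
  next
    assume h: "k \<le> x \<and> \<not>(\<exists>a\<in>M_k k. \<exists>b\<in>M_k k. a+b=x)"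
    show "x \<in> M_k k"
    proof (rule ccontr)
      assume nx: "x \<notin> M_k k"
      define q r where "q = x div p" and "r = x mod p"
      have xe: "x = q*p + r" unfolding q_def r_def by simp
      have rp: "r < p" unfolding r_def using p(2) by simp
      have "\<not>(k \<le> r \<and> r \<le> 2*k-1)" using nx mem[of x] unfolding r_def by blast
      then have "r < k \<or> 2*k \<le> r" using k by linarith
      then show False
      proof
        assume rk: "r < k"
        have "q \<ge> 1" using h xe rk by (cases q) auto
        define a where "a = (q-1)*p + (2*k-1)"
        define b where "b = r + k"
        have "a mod p = 2*k-1" unfolding a_def using p k by (intro modlem) auto
        then have "a \<in> M_k k" using mem k by auto
        moreover have "b mod p = r + k" unfolding b_def using p rk by auto
        then have "b \<in> M_k k" using mem k rk by auto
        moreover have "a + b = x"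
        proof -
          have "a + b = (q-1)*p + p + r" unfolding a_def b_def using p k by auto
          also have "\<dots> = q*p + r" using \<open>q \<ge> 1\<close>
            by (metis add.commute le_add_diff_inverse2 mult_Suc Suc_eq_plus1 diff_Suc_1 add_Suc_right Suc_diff_1 less_one not_less)
          finally show ?thesis using xe by simp
        qed
        ultimately show False using h by blast
      next
        assume rk: "2*k \<le> r"
        define a where "a = q*p + k"
        define b where "b = r - k"
        have "a mod p = k" unfolding a_def using p k by (intro modlem) auto
        then have "a \<in> M_k k" using mem k by auto
        moreover have "b mod p = r - k" unfolding b_def using rp by auto
        then have "b \<in> M_k k" using mem k rk rp p by auto
        moreover have "a + b = x" unfolding a_def b_def using xe rk by auto
        ultimately show False using h by blast
      qed
    qed
  qed
qed

lemma isP_eq: "0 \<notin> M \<Longrightarrow> is_P M x = ((\<exists>m\<in>M. m \<le> x) \<and> (\<forall>m\<in>M. m \<le> x \<longrightarrow> \<not> is_P M (x - m)))"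
  using is_P.simps[of M x] by simp

lemma step:
  assumes M0: "0 \<notin> M" and k: "k \<ge> 1" and kM: "k \<in> M" and mn: "\<forall>y\<in>M. k \<le> y"
    and IH1: "\<forall>y<x. (is_P M y \<longleftrightarrow> y \<in> M_k k)"
    and IH2: "\<forall>y<x. (y \<in> M \<longleftrightarrow> y \<in> M_k k)"
  shows "is_P M x \<longleftrightarrow> x \<in> M_k k"
proof -
  let ?S = "M_k k"
  have "\<not>(\<exists>m\<in>M. m \<le> 0)" using M0 by auto
  then have P0: "\<not> is_P M 0" using isP_eq[OF M0, of 0] by blast
  have E1: "(\<exists>m\<in>M. m \<le> x) \<longleftrightarrow> k \<le> x" using kM mn by (meson le_trans)
  have E2: "(\<forall>m\<in>M. m \<le> x \<longrightarrow> \<not> is_P M (x - m)) \<longleftrightarrow> (\<forall>m\<in>M. m < x \<longrightarrow> \<not> is_P M (x - m))"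
  proof
    assume "\<forall>m\<in>M. m < x \<longrightarrow> \<not> is_P M (x - m)"
    then show "\<forall>m\<in>M. m \<le> x \<longrightarrow> \<not> is_P M (x - m)"
      using P0 by (metis diff_self_eq_0 le_neq_implies_less)
  qed auto
  have E3: "(\<forall>m\<in>M. m < x \<longrightarrow> \<not> is_P M (x - m)) \<longleftrightarrow> (\<forall>m\<in>?S. m < x \<longrightarrow> x - m \<notin> ?S)"
  proof
    assume H: "\<forall>m\<in>M. m < x \<longrightarrow> \<not> is_P M (x - m)"
    show "\<forall>m\<in>?S. m < x \<longrightarrow> x - m \<notin> ?S"
    proof (intro ballI impI)
      fix m assume m: "m \<in> ?S" "m < x"
      then have mM: "m \<in> M" using IH2 by blast
      then have "m > 0" using M0 by (cases m) auto
      then have "x - m < x" using m by simp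
      then show "x - m \<notin> ?S" using IH1 H mM m by blast
    qed
  next
    assume H: "\<forall>m\<in>?S. m < x \<longrightarrow> x - m \<notin> ?S"
    show "\<forall>m\<in>M. m < x \<longrightarrow> \<not> is_P M (x - m)"
    proof (intro ballI impI)
      fix m assume m: "m \<in> M" "m < x"
      then have mS: "m \<in> ?S" using IH2 by blast
      have "m > 0" using M0 m by (cases m) auto
      then have "x - m < x" using m by simp
      then show "\<not> is_P M (x - m)" using IH1 H mS m by blast
    qed
  qed
  have pos: "\<And>b. b \<in> ?S \<Longrightarrow> b > 0" using Mk_ge[OF k] k by fastforce
  have E4: "(\<forall>m\<in>?S. m < x \<longrightarrow> x - m \<notin> ?S) \<longleftrightarrow> \<not>(\<exists>a\<in>?S. \<exists>b\<in>?S. a+b=x)"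
  proof
    assume H: "\<forall>m\<in>?S. m < x \<longrightarrow> x - m \<notin> ?S"
    show "\<not>(\<exists>a\<in>?S. \<exists>b\<in>?S. a+b=x)"
    proof
      assume "\<exists>a\<in>?S. \<exists>b\<in>?S. a+b=x"
      then obtain a b where ab: "a \<in> ?S" "b \<in> ?S" "a+b=x" by blast
      have "b > 0" using pos ab by blast
      then have "a < x" "x - a = b" using ab by auto
      then show False using H ab by blast
    qed
  next
    assume H: "\<not>(\<exists>a\<in>?S. \<exists>b\<in>?S. a+b=x)"
    show "\<forall>m\<in>?S. m < x \<longrightarrow> x - m \<notin> ?S"
    proof (intro ballI impI notI)
      fix m assume m: "m \<in> ?S" "m < x" "x - m \<in> ?S"
      have "m + (x - m) = x" using m by simp
      then show False using H m by blast
    qed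
  qed
  have "is_P M x \<longleftrightarrow> (\<exists>m\<in>M. m \<le> x) \<and> (\<forall>m\<in>M. m \<le> x \<longrightarrow> \<not> is_P M (x - m))"
    by (rule isP_eq[OF M0])
  also have "\<dots> \<longleftrightarrow> k \<le> x \<and> \<not>(\<exists>a\<in>?S. \<exists>b\<in>?S. a+b=x)"
    using E1 E2 E3 E4 by simp
  also have "\<dots> \<longleftrightarrow> x \<in> ?S" using key[OF k, of x] by blast
  finally show ?thesis .
qed

theorem theorem6:
  fixes M :: "nat set"
  shows "reflexive_game M \<longleftrightarrow> (\<exists>k. M = M_k k)"
proof
  assume R: "reflexive_game M"
  then have PM: "\<And>y. is_P M y \<longleftrightarrow> y \<in> M" unfolding reflexive_game_def P_positions_def by blast
  show "\<exists>k. M = M_k k"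
  proof (cases "M = {}")
    case True then show ?thesis by (auto simp: M_k_def)
  next
    case False
    have M0: "0 \<notin> M"
    proof
      assume "0 \<in> M"
      then have "is_P M 0 = False" by (subst is_P.simps) simp
      then show False using PM \<open>0 \<in> M\<close> by blast
    qed
    define k where "k = (LEAST x. x \<in> M)"
    have kM: "k \<in> M" using False k_def by (metis LeastI ex_in_conv)
    have mn: "\<forall>y\<in>M. k \<le> y" using k_def by (simp add: Least_le)
    have k: "k \<ge> 1" using kM M0 by (cases k) auto
    have "\<forall>y<x. y \<in> M \<longleftrightarrow> y \<in> M_k k" for x
    proof (induction x)
      case 0 then show ?case by simp
    next
      case (Suc x)
      have "is_P M x \<longleftrightarrow> x \<in> M_k k"
        by (rule step[OF M0 k kM mn]) (use Suc PM in auto)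
      then show ?case using Suc PM less_Suc_eq by auto
    qed
    then have "M = M_k k" by blast
    then show ?thesis by blast
  qed
next
  assume "\<exists>k. M = M_k k"
  then obtain k where Mk: "M = M_k k" by blast
  show "reflexive_game M"
  proof (cases "k = 0")
    case True
    then have M: "M = {}" using Mk by (simp add: M_k_def)
    have "\<And>x. \<not> is_P M x" using isP_eq[of M] M by blast
    then show ?thesis using M unfolding reflexive_game_def P_positions_def by auto
  next
    case False
    then have k: "k \<ge> 1" by simp
    have mn: "\<forall>y\<in>M. k \<le> y" using Mk Mk_ge[OF k] by blast
    have M0: "0 \<notin> M" using mn k by auto
    have kM: "k \<in> M" using Mk Mk_mem[OF k, of k] k by simp
    have "\<forall>y<x. is_P M y \<longleftrightarrow> y \<in> M_k k" for x
    proof (induction x)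
      case 0 then show ?case by simp
    next
      case (Suc x)
      have "is_P M x \<longleftrightarrow> x \<in> M_k k"
        by (rule step[OF M0 k kM mn]) (use Suc Mk in auto)
      then show ?case using Suc less_Suc_eq by auto
    qed
    then have "\<And>y. is_P M y \<longleftrightarrow> y \<in> M" using Mk by blast
    then show ?thesis unfolding reflexive_game_def P_positions_def by auto
  qed
qed

end
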